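(* Let $D$ be the diamond graph with $V=\{1,2,3,4\}$ and $E=\{\{1,2\},\{1,3\},\{2,3\},\{2,4\},\{3,4\}\}$, and let $\mathcal{Q}_{\mathrm{Gre}}(D)=\{q\in\mathbb{N}^4:q_iq_j=0\text{ for all }\{i,j\}\in E\}$. For $q=(q_1,q_2,q_3,q_4)$ let $\langle q\rangle=(q_1+q_4,q_2,q_3)$, and let $\langle i\rangle=i$ for $i\in\{1,2,3,\bot\}$ and $\langle4\rangle=1$. Let $\Phi_{\mathrm{Gre}}(K_3)$ be the deterministic size-based policy on the complete graph $K_3$ with nodes $\{1,2,3\}$ given by $\Phi_{\mathrm{Gre}}(K_3)(q,i)=j$ if $q_j\ge1$ for some $j\ne i$ and $\bot$ otherwise. Every greedy policy $\Phi$ adapted to $D$ satisfies: (i) if $\Phi$ is deterministic size-based, then $\langle\Phi(q,i)\rangle=\Phi_{\mathrm{Gre}}(K_3)(\langle q\rangle,\langle i\rangle)$ for all $(q,i)\in\mathcal{Q}_{\mathrm{Gre}}(D)\times V$; (ii) in general, if $\Phi$ has state space $(\mathcal{S},|\cdot|)$, then $\sum_{s'\in\mathcal{S}}\sum_{j\in V\cup\{\bot\}:\ \langle j\rangle=\Phi_{\mathrm{Gre}}(K_3)(\langle|s|\rangle,\langle i\rangle)}\Phi(s,i,j,s')=1$ for all $s\in\mathcal{S}$, $i\in V$; (iii) for every sequence $I=(I_t)$ of item classes, $\langle Q_t\rangle=(Q_{\mathrm{Gre}})_t$ for all $t\in\mathbb{N}$, where $Q$ and $Q_{\mathrm{Gre}}$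 are the queue-size processes of the models $(D,I,\Phi)$ and $(K_3,\langle I\rangle,\Phi_{\mathrm{Gre}}(K_3))$, with $\langle I\rangle=(\langle I_t\rangle)_t$.
   Context: Matching dynamics: items of classes $I_0,I_1,\dots$ arrive one at a time; a class-$i$ item can be matched with an unmatched class-$j$ item iff $\{i,j\}$ is an edge; matched items leave; the system starts empty. A (general) policy adapted to a graph: countable state space $\mathcal{S}$, map $|\cdot|:\mathcal{S}\to\mathbb{N}^n$ (unmatched items per class) with unique empty state $\varnothing$, and $\Phi(s,i,j,s')\in[0,1]$, the probability that an arriving class-$i$ item finding state $s$ is matched with class $j$ ($j=\bot$: left unmatched) and the new state is $s'$; $\Phi(s,i,j,s')>0$ only if $j\in\{j'\in V_i:|s|_{j'}\ge1\}\cup\{\bot\}$ ($V_i$ the neighbours of $i$) and $|s'|=|s|+\mathbf{1}_i$ if $j=\bot$, $|s|-\mathbf{1}_j$ otherwise; irreducible state chain from $\varnothing$. Deterministic size-based: $\mathcal{S}\subseteq\mathbb{N}^n$, $|\cdot|$ the identity, and the decision is a function $\Phi(q,i)\in V\cup\{\bot\}$. Greedy: no arriving item is left unmatched while a compatible item is waiting (so queue-size vectors lie in $\mathcal{Q}_{\mathrm{Gre}}$). Queue-size process: $Q_t=|S_t|$ after the first $t$ arrivals. *)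

theory Defs
  imports "HOL-Analysis.Analysis"
begin

text \<open>Item classes are natural numbers; the "unmatched" outcome \<bottom> is None,
  a match with class j is Some j. Queue-size vectors in N^n are functions nat => nat
  (coordinates outside the vertex set are 0).\<close>

definition upd_size :: "(nat \<Rightarrow> nat) \<Rightarrow> nat \<Rightarrow> nat option \<Rightarrow> (nat \<Rightarrow> nat)" where
  "upd_size q i j = (case j of None \<Rightarrow> q(i := q i + 1) | Some k \<Rightarrow> q(k := q k - 1))"

definition step_rel :: "nat set \<Rightarrow> 's set \<Rightarrow> ('s \<Rightarrow> nat \<Rightarrow> nat option \<Rightarrow> 's \<Rightarrow> real) \<Rightarrow> ('s \<times> 's) set" where
  "step_rel V S \<Phi> = {(s, s'). s \<in> S \<and> s' \<in> S \<and> (\<exists>i\<in>V. \<exists>j. \<Phi> s i j s' > 0)}"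

definition adapted_policy ::
  "nat set \<Rightarrow> nat set set \<Rightarrow> 's set \<Rightarrow> ('s \<Rightarrow> nat \<Rightarrow> nat) \<Rightarrow> 's \<Rightarrow>
   ('s \<Rightarrow> nat \<Rightarrow> nat option \<Rightarrow> 's \<Rightarrow> real) \<Rightarrow> bool" where
  "adapted_policy V E S sz e \<Phi> \<longleftrightarrow>
     countable S \<and> e \<in> S \<and>
     (\<forall>s\<in>S. \<forall>k. k \<notin> V \<longrightarrow> sz s k = 0) \<and>
     (\<forall>s\<in>S. sz s = (\<lambda>_. 0) \<longleftrightarrow> s = e) \<and>
     (\<forall>s\<in>S. \<forall>i\<in>V. \<forall>j s'. 0 \<le> \<Phi> s i j s' \<and> \<Phi> s i j s' \<le> 1) \<and>
     (\<forall>s\<in>S. \<forall>i\<in>V. \<forall>j s'. \<Phi> s i j s' > 0 \<longrightarrow>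
          s' \<in> S \<and>
          (j = None \<or> (\<exists>k. j = Some k \<and> {i, k} \<in> E \<and> sz s k \<ge> 1)) \<and>
          sz s' = upd_size (sz s) i j) \<and>
     (\<forall>s\<in>S. \<forall>i\<in>V.
          ((\<lambda>(j, s'). \<Phi> s i j s') has_sum 1) ((insert None (Some ` V)) \<times> S)) \<and>
     (\<forall>s\<in>S. \<forall>s'\<in>S. (s, s') \<in> (step_rel V S \<Phi>)\<^sup>*)"

definition greedy_policy ::
  "nat set \<Rightarrow> nat set set \<Rightarrow> 's set \<Rightarrow> ('s \<Rightarrow> nat \<Rightarrow> nat) \<Rightarrow>
   ('s \<Rightarrow> nat \<Rightarrow> nat option \<Rightarrow> 's \<Rightarrow> real) \<Rightarrow> bool" where
  "greedy_policy V E S sz \<Phi> \<longleftrightarrow>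
     (\<forall>s\<in>S. \<forall>i\<in>V. \<forall>s'. \<Phi> s i None s' > 0 \<longrightarrow> (\<forall>k. {i, k} \<in> E \<longrightarrow> sz s k = 0))"

definition det_kernel ::
  "((nat \<Rightarrow> nat) \<Rightarrow> nat \<Rightarrow> nat option) \<Rightarrow>
   (nat \<Rightarrow> nat) \<Rightarrow> nat \<Rightarrow> nat option \<Rightarrow> (nat \<Rightarrow> nat) \<Rightarrow> real" where
  "det_kernel \<phi> q i j q' = (if j = \<phi> q i \<and> q' = upd_size q i j then 1 else 0)"

definition Q_gre :: "nat set \<Rightarrow> nat set set \<Rightarrow> (nat \<Rightarrow> nat) set" where
  "Q_gre V E = {q. (\<forall>k. k \<notin> V \<longrightarrow> q k = 0) \<and> (\<forall>i j. {i, j} \<in> E \<longrightarrow> q i * q j = 0)}"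

definition diamond_V :: "nat set" where "diamond_V = {1, 2, 3, 4}"

definition diamond_E :: "nat set set" where
  "diamond_E = {{1, 2}, {1, 3}, {2, 3}, {2, 4}, {3, 4}}"

definition proj_cls :: "nat \<Rightarrow> nat" where "proj_cls i = (if i = 4 then 1 else i)"

definition proj_opt :: "nat option \<Rightarrow> nat option" where "proj_opt j = map_option proj_cls j"

definition proj_q :: "(nat \<Rightarrow> nat) \<Rightarrow> (nat \<Rightarrow> nat)" where
  "proj_q q = (\<lambda>k. if k = 1 then q 1 + q 4 else if k = 2 \<or> k = 3 then q k else 0)"

text \<open>On greedy states of K3 at most one coordinate is nonzero, so such j is unique there;
  as a total function we pick the least one.\<close>
definition phi_gre_K3 :: "(nat \<Rightarrow> nat) \<Rightarrow> nat \<Rightarrow> nat option" where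
  "phi_gre_K3 q i =
     (if \<exists>j\<in>{1, 2, 3}. j \<noteq> i \<and> q j \<ge> 1
      then Some (LEAST j. j \<in> {1, 2, 3} \<and> j \<noteq> i \<and> q j \<ge> 1) else None)"

fun queue_gre_K3 :: "(nat \<Rightarrow> nat) \<Rightarrow> nat \<Rightarrow> (nat \<Rightarrow> nat)" where
  "queue_gre_K3 I 0 = (\<lambda>_. 0)"
| "queue_gre_K3 I (Suc t) =
     upd_size (queue_gre_K3 I t) (I t) (phi_gre_K3 (queue_gre_K3 I t) (I t))"

end

theory Submission
  imports Defs
begin

lemma edge_iff: "{i,k} \<in> diamond_E \<longleftrightarrow>
   (i=1\<and>k=2) \<or> (i=2\<and>k=1) \<or> (i=1\<and>k=3) \<or> (i=3\<and>k=1) \<or> (i=2\<and>k=3) \<or> (i=3\<and>k=2) \<or>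
   (i=2\<and>k=4) \<or> (i=4\<and>k=2) \<or> (i=3\<and>k=4) \<or> (i=4\<and>k=3)"
  unfolding diamond_E_def by (auto simp: doubleton_eq_iff)

lemma V_iff: "i \<in> diamond_V \<longleftrightarrow> i = 1 \<or> i = 2 \<or> i = 3 \<or> i = 4"
  unfolding diamond_V_def by auto

lemma Q_iff: "q \<in> Q_gre diamond_V diamond_E \<longleftrightarrow>
   (\<forall>k. k \<noteq> 1 \<and> k \<noteq> 2 \<and> k \<noteq> 3 \<and> k \<noteq> 4 \<longrightarrow> q k = 0) \<and>
   q 1 * q 2 = 0 \<and> q 1 * q 3 = 0 \<and> q 2 * q 3 = 0 \<and> q 2 * q 4 = 0 \<and> q 3 * q 4 = 0"
  unfolding Q_gre_def V_iff edge_iff by (auto simp: mult.commute)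

lemma phi1: "phi_gre_K3 p 1 = (if p 2 \<ge> 1 then Some 2 else if p 3 \<ge> 1 then Some 3 else None)"
proof -
  have a: "(LEAST j::nat. j \<in> {1, 2, 3} \<and> j \<noteq> 1 \<and> p j \<ge> 1) = 2" if "p 2 \<ge> 1"
    by (rule Least_equality) (use that in auto)
  have b: "(LEAST j::nat. j \<in> {1, 2, 3} \<and> j \<noteq> 1 \<and> p j \<ge> 1) = 3" if "\<not> p 2 \<ge> 1" "p 3 \<ge> 1"
    by (rule Least_equality) (use that in auto)
  show ?thesis unfolding phi_gre_K3_def using a b by auto
qed

lemma phi2: "phi_gre_K3 p 2 = (if p 1 \<ge> 1 then Some 1 else if p 3 \<ge> 1 then Some 3 else None)"
proof -
  have a: "(LEAST j::nat. j \<in> {1, 2, 3} \<and> j \<noteq> 2 \<and> p j \<ge> 1) = 1" if "p 1 \<ge> 1"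
    by (rule Least_equality) (use that in auto)
  have b: "(LEAST j::nat. j \<in> {1, 2, 3} \<and> j \<noteq> 2 \<and> p j \<ge> 1) = 3" if "\<not> p 1 \<ge> 1" "p 3 \<ge> 1"
    by (rule Least_equality) (use that in auto)
  show ?thesis unfolding phi_gre_K3_def using a b by auto
qed

lemma phi3: "phi_gre_K3 p 3 = (if p 1 \<ge> 1 then Some 1 else if p 2 \<ge> 1 then Some 2 else None)"
proof -
  have a: "(LEAST j::nat. j \<in> {1, 2, 3} \<and> j \<noteq> 3 \<and> p j \<ge> 1) = 1" if "p 1 \<ge> 1"
    by (rule Least_equality) (use that in auto)
  have b: "(LEAST j::nat. j \<in> {1, 2, 3} \<and> j \<noteq> 3 \<and> p j \<ge> 1) = 2" if "\<not> p 1 \<ge> 1" "p 2 \<ge> 1"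
    by (rule Least_equality) (use that in auto)
  show ?thesis unfolding phi_gre_K3_def using a b by auto
qed


lemma Q_iff2: "q \<in> Q_gre diamond_V diamond_E \<longleftrightarrow>
   (\<forall>k. k \<noteq> 1 \<and> k \<noteq> 2 \<and> k \<noteq> 3 \<and> k \<noteq> 4 \<longrightarrow> q k = 0) \<and>
   (q 1 = 0 \<or> q 2 = 0) \<and> (q 1 = 0 \<or> q 3 = 0) \<and> (q 2 = 0 \<or> q 3 = 0) \<and> (q 2 = 0 \<or> q 4 = 0) \<and> (q 3 = 0 \<or> q 4 = 0)"
  unfolding Q_iff by simp

lemma phi1': "phi_gre_K3 p (Suc 0) = (if p 2 \<ge> 1 then Some 2 else if p 3 \<ge> 1 then Some 3 else None)"
  using phi1 by simp

definition valid :: "(nat \<Rightarrow> nat) \<Rightarrow> nat \<Rightarrow> nat option \<Rightarrow> bool" where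
  "valid q i j \<longleftrightarrow> (j = None \<or> (\<exists>k. j = Some k \<and> {i, k} \<in> diamond_E \<and> q k \<ge> 1)) \<and>
     (j = None \<longrightarrow> (\<forall>k. {i, k} \<in> diamond_E \<longrightarrow> q k = 0))"

lemma valid_cases:
  assumes "i \<in> diamond_V" "valid q i j"
  shows "(i = 1 \<and> j = None \<and> q 2 = 0 \<and> q 3 = 0) \<or> (i = 1 \<and> j = Some 2 \<and> q 2 \<ge> 1) \<or> (i = 1 \<and> j = Some 3 \<and> q 3 \<ge> 1) \<or>
         (i = 4 \<and> j = None \<and> q 2 = 0 \<and> q 3 = 0) \<or> (i = 4 \<and> j = Some 2 \<and> q 2 \<ge> 1) \<or> (i = 4 \<and> j = Some 3 \<and> q 3 \<ge> 1) \<or>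
         (i = 2 \<and> j = None \<and> q 1 = 0 \<and> q 3 = 0 \<and> q 4 = 0) \<or> (i = 2 \<and> j = Some 1 \<and> q 1 \<ge> 1) \<or> (i = 2 \<and> j = Some 3 \<and> q 3 \<ge> 1) \<or> (i = 2 \<and> j = Some 4 \<and> q 4 \<ge> 1) \<or>
         (i = 3 \<and> j = None \<and> q 1 = 0 \<and> q 2 = 0 \<and> q 4 = 0) \<or> (i = 3 \<and> j = Some 1 \<and> q 1 \<ge> 1) \<or> (i = 3 \<and> j = Some 2 \<and> q 2 \<ge> 1) \<or> (i = 3 \<and> j = Some 4 \<and> q 4 \<ge> 1)"
proof -
  from assms(2) have v1: "j = None \<or> (\<exists>k. j = Some k \<and> {i, k} \<in> diamond_E \<and> q k \<ge> 1)"
    and v2: "j = None \<longrightarrow> (\<forall>k. {i, k} \<in> diamond_E \<longrightarrow> q k = 0)" unfolding valid_def by blast+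
  show ?thesis
  proof (cases j)
    case None
    with v2 have n: "\<And>k. {i, k} \<in> diamond_E \<Longrightarrow> q k = 0" by simp
    from assms(1) have "i = 1 \<or> i = 2 \<or> i = 3 \<or> i = 4" unfolding V_iff .
    then show ?thesis
    proof (elim disjE)
      assume "i = 1" then show ?thesis using None n[of 2] n[of 3] by (simp add: edge_iff)
    next
      assume "i = 2" then show ?thesis using None n[of 1] n[of 3] n[of 4] by (simp add: edge_iff)
    next
      assume "i = 3" then show ?thesis using None n[of 1] n[of 2] n[of 4] by (simp add: edge_iff)
    next
      assume "i = 4" then show ?thesis using None n[of 2] n[of 3] by (simp add: edge_iff)
    qed
  next
    case (Some k)
    with v1 have e: "{i, k} \<in> diamond_E" and qk: "q k \<ge> 1" by auto
    from e show ?thesis unfolding edge_iff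
      by (elim disjE conjE) (use Some qk in simp_all)
  qed
qed

lemma Q_rules:
  assumes "q \<in> Q_gre diamond_V diamond_E"
  shows "\<And>k. k \<noteq> 1 \<Longrightarrow> k \<noteq> 2 \<Longrightarrow> k \<noteq> 3 \<Longrightarrow> k \<noteq> 4 \<Longrightarrow> q k = 0"
    "1 \<le> q 1 \<Longrightarrow> q 2 = 0" "1 \<le> q 2 \<Longrightarrow> q 1 = 0"
    "1 \<le> q 1 \<Longrightarrow> q 3 = 0" "1 \<le> q 3 \<Longrightarrow> q 1 = 0"
    "1 \<le> q 2 \<Longrightarrow> q 3 = 0" "1 \<le> q 3 \<Longrightarrow> q 2 = 0"
    "1 \<le> q 2 \<Longrightarrow> q 4 = 0" "1 \<le> q 4 \<Longrightarrow> q 2 = 0"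
    "1 \<le> q 3 \<Longrightarrow> q 4 = 0" "1 \<le> q 4 \<Longrightarrow> q 3 = 0"
  using assms unfolding Q_iff2 by auto

lemma valid_cases2:
  assumes "q \<in> Q_gre diamond_V diamond_E" "i \<in> diamond_V" "valid q i j"
  shows " (i = 1 \<and> j = None \<and> q 2 = 0 \<and> q 3 = 0) \<or> (i = 1 \<and> j = Some 2 \<and> q 2 \<ge> 1 \<and> q 1 = 0 \<and> q 3 = 0 \<and> q 4 = 0) \<or> (i = 1 \<and> j = Some 3 \<and> q 3 \<ge> 1 \<and> q 1 = 0 \<and> q 2 = 0 \<and> q 4 = 0) \<or>
         (i = 4 \<and> j = None \<and> q 2 = 0 \<and> q 3 = 0) \<or> (i = 4 \<and> j = Some 2 \<and> q 2 \<ge> 1 \<and> q 1 = 0 \<and> q 3 = 0 \<and> q 4 = 0) \<or> (i = 4 \<and> j = Some 3 \<and> q 3 \<ge> 1 \<and> q 1 = 0 \<and> q 2 = 0 \<and> q 4 = 0) \<or>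
         (i = 2 \<and> j = None \<and> q 1 = 0 \<and> q 3 = 0 \<and> q 4 = 0) \<or> (i = 2 \<and> j = Some 1 \<and> q 1 \<ge> 1 \<and> q 2 = 0 \<and> q 3 = 0) \<or> (i = 2 \<and> j = Some 3 \<and> q 3 \<ge> 1 \<and> q 1 = 0 \<and> q 2 = 0 \<and> q 4 = 0) \<or> (i = 2 \<and> j = Some 4 \<and> q 4 \<ge> 1 \<and> q 2 = 0 \<and> q 3 = 0) \<or>
         (i = 3 \<and> j = None \<and> q 1 = 0 \<and> q 2 = 0 \<and> q 4 = 0) \<or> (i = 3 \<and> j = Some 1 \<and> q 1 \<ge> 1 \<and> q 2 = 0 \<and> q 3 = 0) \<or> (i = 3 \<and> j = Some 2 \<and> q 2 \<ge> 1 \<and> q 1 = 0 \<and> q 3 = 0 \<and> q 4 = 0) \<or> (i = 3 \<and> j = Some 4 \<and> q 4 \<ge> 1 \<and> q 2 = 0 \<and> q 3 = 0)"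
  using valid_cases[OF assms(2,3)]
  apply (elim disjE conjE)
                apply simp_all
  apply (auto intro: Q_rules(2-11)[OF assms(1)] Q_rules(2-11)[OF assms(1), simplified])
  done

lemma key:
  assumes "q \<in> Q_gre diamond_V diamond_E" "i \<in> diamond_V" "valid q i j"
  shows "proj_opt j = phi_gre_K3 (proj_q q) (proj_cls i)"
  using valid_cases2[OF assms]
  by (elim disjE conjE) (simp_all add: phi1 phi1' phi2 phi3 proj_opt_def proj_q_def proj_cls_def)

lemma upd_Q:
  assumes "q \<in> Q_gre diamond_V diamond_E" "i \<in> diamond_V" "valid q i j"
  shows "upd_size q i j \<in> Q_gre diamond_V diamond_E"
  using valid_cases2[OF assms] unfolding Q_iff2
  by (elim disjE conjE) (simp_all add: Q_rules(1)[OF assms(1)] upd_size_def)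

lemma proj_upd:
  assumes "q \<in> Q_gre diamond_V diamond_E" "i \<in> diamond_V" "valid q i j"
  shows "proj_q (upd_size q i j) = upd_size (proj_q q) (proj_cls i) (proj_opt j)"
  using valid_cases2[OF assms]
  by (elim disjE conjE) (simp_all add: upd_size_def proj_opt_def proj_q_def proj_cls_def fun_eq_iff)

lemma step_valid:
  assumes A: "adapted_policy diamond_V diamond_E S sz e \<Phi>"
    and G: "greedy_policy diamond_V diamond_E S sz \<Phi>"
    and "s \<in> S" "i \<in> diamond_V" "\<Phi> s i j s' > 0"
  shows "s' \<in> S \<and> valid (sz s) i j \<and> sz s' = upd_size (sz s) i j"
proof -
  have 1: "s' \<in> S \<and> (j = None \<or> (\<exists>k. j = Some k \<and> {i, k} \<in> diamond_E \<and> sz s k \<ge> 1)) \<and>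
          sz s' = upd_size (sz s) i j"
  proof -
    have "\<forall>s\<in>S. \<forall>i\<in>diamond_V. \<forall>j s'. \<Phi> s i j s' > 0 \<longrightarrow>
          s' \<in> S \<and>
          (j = None \<or> (\<exists>k. j = Some k \<and> {i, k} \<in> diamond_E \<and> sz s k \<ge> 1)) \<and>
          sz s' = upd_size (sz s) i j"
      using A unfolding adapted_policy_def by (elim conjE) assumption
    then show ?thesis using assms(3-5) by blast
  qed
  have 2: "j = None \<longrightarrow> (\<forall>k. {i, k} \<in> diamond_E \<longrightarrow> sz s k = 0)"
    using G assms(3-5) unfolding greedy_policy_def by blast
  show ?thesis using 1 2 unfolding valid_def by blast
qed

lemma reach_Q:
  assumes A: "adapted_policy diamond_V diamond_E S sz e \<Phi>"
    and G: "greedy_policy diamond_V diamond_E S sz \<Phi>"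
    and s: "s \<in> S"
  shows "sz s \<in> Q_gre diamond_V diamond_E"
proof -
  have eS: "e \<in> S" using A unfolding adapted_policy_def by blast
  have r: "(e, s) \<in> (step_rel diamond_V S \<Phi>)\<^sup>*" using A eS s unfolding adapted_policy_def by blast
  have ze: "sz e = (\<lambda>_. 0)" using A eS unfolding adapted_policy_def by blast
  from r show ?thesis
  proof (induction rule: rtrancl_induct)
    case base
    then show ?case using ze unfolding Q_iff2 by simp
  next
    case (step y z)
    then obtain i j where y: "y \<in> S" and i: "i \<in> diamond_V" and p: "\<Phi> y i j z > 0"
      unfolding step_rel_def by blast
    from step_valid[OF A G y i p] upd_Q[OF step.IH i] show ?case by simp
  qed
qed

lemma partI:
  assumes A: "adapted_policy diamond_V diamond_E Sd id (\<lambda>_. 0) (det_kernel \<phi>)"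
    and G: "greedy_policy diamond_V diamond_E Sd id (det_kernel \<phi>)"
    and q: "q \<in> Q_gre diamond_V diamond_E" and i: "i \<in> diamond_V"
  shows "proj_opt (\<phi> q i) = phi_gre_K3 (proj_q q) (proj_cls i)"
proof -
  have zero: "(\<lambda>_. 0) \<in> Sd" using A unfolding adapted_policy_def by blast
  have cl: "upd_size q i (\<phi> q i) \<in> Sd \<and> valid q i (\<phi> q i)" if "q \<in> Sd" "i \<in> diamond_V" for q i
    using step_valid[OF A G that, of "\<phi> q i" "upd_size q i (\<phi> q i)"]
    by (simp add: det_kernel_def)
  have sub: "\<forall>q. q \<in> Q_gre diamond_V diamond_E \<longrightarrow> q 1 + q 2 + q 3 + q 4 = n \<longrightarrow> q \<in> Sd" for n
  proof (induction n)
    case 0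
    have "q = (\<lambda>_. 0)" if "q \<in> Q_gre diamond_V diamond_E" "q 1 + q 2 + q 3 + q 4 = 0" for q :: "nat \<Rightarrow> nat"
    proof
      fix x show "q x = 0" using that unfolding Q_iff2 by (cases "x = 1 \<or> x = 2 \<or> x = 3 \<or> x = 4") auto
    qed
    then show ?case using zero by auto
  next
    case (Suc n)
    show ?case
    proof (intro allI impI)
      fix q :: "nat \<Rightarrow> nat"
      assume qQ: "q \<in> Q_gre diamond_V diamond_E" and tot: "q 1 + q 2 + q 3 + q 4 = Suc n"
      obtain k where k: "k \<in> diamond_V" "q k \<ge> 1" using tot unfolding V_iff
        by (metis One_nat_def add_is_0 less_one not_less zero_neq_one Suc_neq_Zero)
      define q' where "q' = q(k := q k - 1)"
      have q'Q: "q' \<in> Q_gre diamond_V diamond_E" using qQ k unfolding Q_iff2 q'_def V_iff by auto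
      have "q' 1 + q' 2 + q' 3 + q' 4 = n" using tot k unfolding q'_def V_iff by auto
      with Suc q'Q have q'S: "q' \<in> Sd" by blast
      from cl[OF q'S k(1)] have c: "upd_size q' k (\<phi> q' k) \<in> Sd" "valid q' k (\<phi> q' k)" by auto
      have "\<phi> q' k = None"
        using valid_cases[OF k(1) c(2)] qQ k unfolding Q_iff2 q'_def by auto
      moreover have "upd_size q' k None = q" using k unfolding q'_def upd_size_def by (auto simp: fun_eq_iff)
      ultimately show "q \<in> Sd" using c by simp
    qed
  qed
  have "q \<in> Sd" using sub q by blast
  from cl[OF this i] key[OF q i] show ?thesis by blast
qed

lemma partII:
  assumes adapted: "adapted_policy diamond_V diamond_E S sz e \<Phi>"
    and greedy: "greedy_policy diamond_V diamond_E S sz \<Phi>"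
    and s: "s \<in> S" and i: "i \<in> diamond_V"
  shows "infsum (\<lambda>s'. \<Sum>j\<in>{j \<in> insert None (Some ` diamond_V).
                           proj_opt j = phi_gre_K3 (proj_q (sz s)) (proj_cls i)}. \<Phi> s i j s') S = 1"
proof -
    define J where "J = insert None (Some ` diamond_V)"
    define T where "T = phi_gre_K3 (proj_q (sz s)) (proj_cls i)"
    have fJ: "finite J" unfolding J_def diamond_V_def by simp
    have sQ: "sz s \<in> Q_gre diamond_V diamond_E" using reach_Q[OF adapted greedy s] .
    have nn0: "\<forall>s\<in>S. \<forall>i\<in>diamond_V. \<forall>j s'. 0 \<le> \<Phi> s i j s' \<and> \<Phi> s i j s' \<le> 1"
      using adapted unfolding adapted_policy_def by (elim conjE) assumption
    have nn: "0 \<le> \<Phi> s i j s'" for j s' using nn0 s i by blast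
    have zero: "\<Phi> s i j s' = 0" if "proj_opt j \<noteq> T" for j s'
    proof (rule ccontr)
      assume "\<Phi> s i j s' \<noteq> 0"
      with nn have "\<Phi> s i j s' > 0" by (simp add: order_less_le)
      from step_valid[OF adapted greedy s i this] key[OF sQ i] that show False unfolding T_def by blast
    qed
    have eq: "(\<Sum>j\<in>{j \<in> J. proj_opt j = T}. \<Phi> s i j s') = (\<Sum>j\<in>J. \<Phi> s i j s')" for s'
      by (rule sum.mono_neutral_left) (use fJ zero in auto)
    have hs0: "\<forall>s\<in>S. \<forall>i\<in>diamond_V.
          ((\<lambda>(j, s'). \<Phi> s i j s') has_sum 1) ((insert None (Some ` diamond_V)) \<times> S)"
      using adapted unfolding adapted_policy_def by (elim conjE) assumption
    have hs: "((\<lambda>(j, s'). \<Phi> s i j s') has_sum 1) (J \<times> S)"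
      using hs0 s i unfolding J_def by blast
    hence hs2: "((\<lambda>(s', j). \<Phi> s i j s') has_sum 1) (S \<times> J)"
      by (subst (asm) has_sum_swap) (simp add: case_prod_unfold)
    have inner: "((\<lambda>j. \<Phi> s i j s') has_sum (\<Sum>j\<in>J. \<Phi> s i j s')) J" for s'
      using fJ by (rule has_sum_finite)
    have "((\<lambda>s'. \<Sum>j\<in>J. \<Phi> s i j s') has_sum 1) S"
      by (rule has_sum_SigmaD[where B="\<lambda>_. J", OF hs2]) (simp add: inner)
    hence "infsum (\<lambda>s'. \<Sum>j\<in>J. \<Phi> s i j s') S = 1" by (rule infsumI)
    then show ?thesis
      using eq unfolding J_def T_def by simp
qed

lemma partIII:
  assumes adapted: "adapted_policy diamond_V diamond_E S sz e \<Phi>"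
    and greedy: "greedy_policy diamond_V diamond_E S sz \<Phi>"
    and H: "(\<forall>t. I t \<in> diamond_V) \<and> st 0 = e \<and> (\<forall>t. \<Phi> (st t) (I t) (jt t) (st (Suc t)) > 0)"
  shows "proj_q (sz (st t)) = queue_gre_K3 (\<lambda>t. proj_cls (I t)) t"
proof -
    have eS: "e \<in> S" using adapted unfolding adapted_policy_def by (elim conjE) assumption
    have ze0: "\<forall>s\<in>S. sz s = (\<lambda>_. 0) \<longleftrightarrow> s = e" using adapted unfolding adapted_policy_def by (elim conjE) assumption
    have ze: "sz e = (\<lambda>_. 0)" using ze0 eS by blast
    have i: "I t \<in> diamond_V" for t using H by blast
    have p: "\<Phi> (st t) (I t) (jt t) (st (Suc t)) > 0" for t using H by blast
    have stS: "st t \<in> S" for t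
    proof (induction t)
      case 0 then show ?case using H eS by simp
    next
      case (Suc t) then show ?case using step_valid[OF adapted greedy Suc i p] by blast
    qed
    show ?thesis
    proof (induction t)
      case 0
      have "proj_q (sz (st 0)) = (\<lambda>_. 0)" using H ze by (simp add: proj_q_def fun_eq_iff)
      then show ?case by (simp only: queue_gre_K3.simps)
    next
      case (Suc t)
      note sv = step_valid[OF adapted greedy stS i p, of t]
      have sQ: "sz (st t) \<in> Q_gre diamond_V diamond_E" using reach_Q[OF adapted greedy stS] .
      have e1: "sz (st (Suc t)) = upd_size (sz (st t)) (I t) (jt t)" using sv by blast
      have e2: "proj_q (upd_size (sz (st t)) (I t) (jt t)) = upd_size (proj_q (sz (st t))) (proj_cls (I t)) (proj_opt (jt t))"
        using sv proj_upd[OF sQ i] by blast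
      have e3: "proj_opt (jt t) = phi_gre_K3 (proj_q (sz (st t))) (proj_cls (I t))"
        using key[OF sQ i] sv by blast
      show ?case by (simp only: e1 e2 e3 Suc.IH queue_gre_K3.simps)
    qed
qed

theorem proposition6p6:
  fixes S :: "'s set" and sz :: "'s \<Rightarrow> nat \<Rightarrow> nat" and e :: 's
    and \<Phi> :: "'s \<Rightarrow> nat \<Rightarrow> nat option \<Rightarrow> 's \<Rightarrow> real"
  assumes adapted: "adapted_policy diamond_V diamond_E S sz e \<Phi>"
    and greedy: "greedy_policy diamond_V diamond_E S sz \<Phi>"
  shows
    \<comment> \<open>(i) deterministic size-based greedy policies adapted to D\<close>
    "(\<forall>(Sd :: (nat \<Rightarrow> nat) set) (\<phi> :: (nat \<Rightarrow> nat) \<Rightarrow> nat \<Rightarrow> nat option).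
        adapted_policy diamond_V diamond_E Sd id (\<lambda>_. 0) (det_kernel \<phi>) \<and>
        greedy_policy diamond_V diamond_E Sd id (det_kernel \<phi>) \<longrightarrow>
        (\<forall>q\<in>Q_gre diamond_V diamond_E. \<forall>i\<in>diamond_V.
            proj_opt (\<phi> q i) = phi_gre_K3 (proj_q q) (proj_cls i)))
     \<and>
    \<comment> \<open>(ii) general policies\<close>
     (\<forall>s\<in>S. \<forall>i\<in>diamond_V.
        infsum (\<lambda>s'. \<Sum>j\<in>{j \<in> insert None (Some ` diamond_V).
                           proj_opt j = phi_gre_K3 (proj_q (sz s)) (proj_cls i)}. \<Phi> s i j s') S = 1)
     \<and>
    \<comment> \<open>(iii) queue-size processes along every realization of positive probability\<close>
     (\<forall>(I :: nat \<Rightarrow> nat) (st :: nat \<Rightarrow> 's) (jt :: nat \<Rightarrow> nat option).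
        (\<forall>t. I t \<in> diamond_V) \<and> st 0 = e \<and>
        (\<forall>t. \<Phi> (st t) (I t) (jt t) (st (Suc t)) > 0) \<longrightarrow>
        (\<forall>t. proj_q (sz (st t)) = queue_gre_K3 (\<lambda>t. proj_cls (I t)) t))"
  proof (intro conjI)
  show "\<forall>Sd \<phi>. adapted_policy diamond_V diamond_E Sd id (\<lambda>_. 0) (det_kernel \<phi>) \<and>
        greedy_policy diamond_V diamond_E Sd id (det_kernel \<phi>) \<longrightarrow>
        (\<forall>q\<in>Q_gre diamond_V diamond_E. \<forall>i\<in>diamond_V.
            proj_opt (\<phi> q i) = phi_gre_K3 (proj_q q) (proj_cls i))"
  proof (intro allI impI ballI)
    fix Sd :: "(nat \<Rightarrow> nat) set" and \<phi> q i
    assume h: "adapted_policy diamond_V diamond_E Sd id (\<lambda>_. 0) (det_kernel \<phi>) \<and>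
        greedy_policy diamond_V diamond_E Sd id (det_kernel \<phi>)"
      and q: "q \<in> Q_gre diamond_V diamond_E" and i: "i \<in> diamond_V"
    from h have h1: "adapted_policy diamond_V diamond_E Sd id (\<lambda>_. 0) (det_kernel \<phi>)"
      and h2: "greedy_policy diamond_V diamond_E Sd id (det_kernel \<phi>)" by (rule conjunct1, rule conjunct2)
    show "proj_opt (\<phi> q i) = phi_gre_K3 (proj_q q) (proj_cls i)" by (rule partI[OF h1 h2 q i])
  qed
  show "\<forall>s\<in>S. \<forall>i\<in>diamond_V.
        infsum (\<lambda>s'. \<Sum>j\<in>{j \<in> insert None (Some ` diamond_V).
                           proj_opt j = phi_gre_K3 (proj_q (sz s)) (proj_cls i)}. \<Phi> s i j s') S = 1"
  proof (intro ballI)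
    fix s i assume s: "s \<in> S" and i: "i \<in> diamond_V"
    show "infsum (\<lambda>s'. \<Sum>j\<in>{j \<in> insert None (Some ` diamond_V).
                           proj_opt j = phi_gre_K3 (proj_q (sz s)) (proj_cls i)}. \<Phi> s i j s') S = 1"
      by (rule partII[OF adapted greedy s i])
  qed
  show "\<forall>(I :: nat \<Rightarrow> nat) (st :: nat \<Rightarrow> 's) (jt :: nat \<Rightarrow> nat option).
        (\<forall>t. I t \<in> diamond_V) \<and> st 0 = e \<and>
        (\<forall>t. \<Phi> (st t) (I t) (jt t) (st (Suc t)) > 0) \<longrightarrow>
        (\<forall>t. proj_q (sz (st t)) = queue_gre_K3 (\<lambda>t. proj_cls (I t)) t)"
  proof (intro allI impI)
    fix I :: "nat \<Rightarrow> nat" and st :: "nat \<Rightarrow> 's" and jt :: "nat \<Rightarrow> nat option" and t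
    assume H: "(\<forall>t. I t \<in> diamond_V) \<and> st 0 = e \<and> (\<forall>t. \<Phi> (st t) (I t) (jt t) (st (Suc t)) > 0)"
    show "proj_q (sz (st t)) = queue_gre_K3 (\<lambda>t. proj_cls (I t)) t"
      by (rule partIII[OF adapted greedy H])
  qed
qed

end
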